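(* There exists an absolute constant $\delta>0$ such that for every $t\in[0,1]$ and every integer $m\ge0$ the following hold. (i) For every $z\in\mathbb C$ with $|\operatorname{Im}z|\le\delta$ there is $k_0\in\{0,\dots,m\}$ with $|\Phi_{k_0}(z)|\ge3^{-m}$. (ii) For every $x_0\in\mathbb R$, with $R=[x_0-\delta,x_0+\delta]\times[-\delta,\delta]\subset\mathbb C$, there is at most one index $k_0\in\{0,\dots,m\}$ which is critical for $R$, where $k_0$ is called critical for $R$ if there is $z_0\in R$ with $|\tilde\varphi_{k_0}(z_0)|<3^{-m}$.
   Context: For fixed $t\in[0,1]$: $\tilde\varphi(z)=1+e^{-iz}+e^{-itz}$, $\tilde\varphi_k(z)=\tilde\varphi(3^{-k}z)$ for integers $k\ge0$, $\Phi(z)=\prod_{k=0}^m\tilde\varphi_k(z)$, and $\Phi_{k_0}(z)=\prod_{k\in\{0,\dots,m\}\setminus\{k_0\}}\tilde\varphi_k(z)$. *)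

theory Defs
  imports "HOL-Analysis.Analysis"
begin

definition phit :: "real \<Rightarrow> complex \<Rightarrow> complex" where
  "phit t z = 1 + exp (- \<i> * z) + exp (- \<i> * complex_of_real t * z)"

definition phik :: "real \<Rightarrow> nat \<Rightarrow> complex \<Rightarrow> complex" where
  "phik t k z = phit t (z / 3 ^ k)"

definition Phi :: "real \<Rightarrow> nat \<Rightarrow> complex \<Rightarrow> complex" where
  "Phi t m z = (\<Prod>k\<in>{0..m}. phik t k z)"

definition Phi_excl :: "real \<Rightarrow> nat \<Rightarrow> nat \<Rightarrow> complex \<Rightarrow> complex" where
  "Phi_excl t m k0 z = (\<Prod>k\<in>{0..m} - {k0}. phik t k z)"

definition rect :: "real \<Rightarrow> real \<Rightarrow> complex set" where
  "rect x0 d = {z. x0 - d \<le> Re z \<and> Re z \<le> x0 + d \<and> -d \<le> Im z \<and> Im z \<le> d}"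

definition critical :: "real \<Rightarrow> nat \<Rightarrow> complex set \<Rightarrow> nat \<Rightarrow> bool" where
  "critical t m R k0 \<longleftrightarrow> (\<exists>z0\<in>R. norm (phik t k0 z0) < 3 powr (- real m))"

end

theory Submission
  imports Defs
begin


lemma cos_lip: "cos (x::real) \<ge> cos y - \<bar>x - y\<bar>"
proof -
  have "\<bar>cos y - cos x\<bar> = \<bar>2 * sin ((y + x) / 2) * sin ((x - y) / 2)\<bar>"
    by (simp add: cos_diff_cos)
  also have "\<dots> \<le> 2 * \<bar>sin ((x - y) / 2)\<bar>"
    unfolding abs_mult by (intro mult_right_mono) auto
  also have "\<dots> \<le> 2 * \<bar>(x - y)/2\<bar>" using abs_sin_x_le_abs_x[of "(x-y)/2"] by linarith
  finally show ?thesis by simp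
qed

lemma exp_near1: assumes "\<bar>y::real\<bar> \<le> 1/2" shows "\<bar>exp y - 1\<bar> \<le> 2 * \<bar>y\<bar>"
proof (cases "y \<ge> 0")
  case True thus ?thesis using real_exp_bound_lemma[of y] assms by auto
next
  case False
  have "exp y \<le> 1" using False by simp
  moreover have "1 + y \<le> exp y" by (rule exp_ge_add_one_self)
  ultimately have "1 - exp y \<le> - y" "exp y - 1 \<le> 0" by linarith+
  thus ?thesis using False by (simp add: abs_if)
qed

lemma cos3_le: "1 - cos (3 * (x::real)) \<le> 9 * (1 - cos x)"
proof -
  have "0 \<le> cos x + 2" using cos_ge_minus_one[of x] by linarith
  hence "0 \<le> (cos x - 1)^2 * (cos x + 2)" by simp
  thus ?thesis unfolding cos_treble_cos by (simp add: power2_eq_square power3_eq_cube algebra_simps)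
qed

lemma cos3pow: "j \<ge> 1 \<Longrightarrow> 1 - cos (3^j * (x::real)) \<le> 9^(j-1) * (1 - cos (3 * x))"
proof (induction j)
  case 0 thus ?case by simp
next
  case (Suc j)
  show ?case
  proof (cases "j = 0")
    case True thus ?thesis by (simp add: cos3_le)
  next
    case False
    have "1 - cos (3^Suc j * x) = 1 - cos (3 * (3^j * x))" by (simp add: mult.assoc)
    also have "\<dots> \<le> 9 * (1 - cos (3^j * x))" by (rule cos3_le)
    also have "\<dots> \<le> 9 * (9^(j-1) * (1 - cos (3 * x)))" using Suc False by simp
    also have "\<dots> = 9^(Suc j - 1) * (1 - cos (3 * x))" using False
      by (cases j) auto
    finally show ?thesis .
  qed
qed

lemma norm_ge1: assumes "r \<ge> 0" "\<rho> \<ge> 0" "cos a \<ge> 0" "cos b \<ge> 0"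
  shows "norm (1 + of_real r * cis a + of_real \<rho> * cis b) \<ge> 1"
proof -
  have "Re (1 + of_real r * cis a + of_real \<rho> * cis b) = 1 + r * cos a + \<rho> * cos b" by simp
  also have "\<dots> \<ge> 1" using assms by simp
  finally show ?thesis using complex_Re_le_cmod order_trans by blast
qed

lemma norm1cis_sq: "norm (1 + cis a)^2 = 2 + 2 * cos a"
proof -
  have "norm (1 + cis a)^2 = (1 + cos a)^2 + (sin a)^2"
    by (simp add: cmod_power2)
  also have "\<dots> = 2 + 2 * cos a" using sin_cos_squared_add[of a]
    by (simp add: power2_eq_square algebra_simps)
  finally show ?thesis .
qed

lemma cos_range:
  assumes "norm (1 + cis a + cis b) < \<eta>" "\<eta> < 1"
  shows "cos a + 1/2 \<ge> -\<eta>" "cos a + 1/2 \<le> \<eta> + \<eta>^2/2"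
proof -
  have "norm (1 + cis a) \<le> norm (1 + cis a + cis b) + norm (cis b)"
    using norm_triangle_ineq4[of "1 + cis a + cis b" "cis b"] by simp
  hence u: "norm (1 + cis a) < 1 + \<eta>" using assms by simp
  have "norm (cis b) \<le> norm (1 + cis a + cis b) + norm (1 + cis a)"
    using norm_triangle_ineq4[of "1 + cis a + cis b" "1 + cis a"] by (simp add: algebra_simps)
  hence l: "1 - \<eta> < norm (1 + cis a)" using assms by simp
  have "norm (1 + cis a)^2 < (1 + \<eta>)^2"
    using u by (intro power_strict_mono) auto
  hence "2 + 2 * cos a < (1 + \<eta>)^2" by (simp add: norm1cis_sq)
  thus "cos a + 1/2 \<le> \<eta> + \<eta>^2/2" by (simp add: power2_eq_square algebra_simps)
  have "(1 - \<eta>)^2 < norm (1 + cis a)^2"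
    using l assms by (intro power_strict_mono) auto
  hence "(1 - \<eta>)^2 < 2 + 2 * cos a" by (simp add: norm1cis_sq)
  hence "cos a + 1/2 > -\<eta> + \<eta>^2/2" by (simp add: power2_eq_square algebra_simps)
  moreover have "\<eta>^2/2 \<ge> 0" by simp
  ultimately show "cos a + 1/2 \<ge> -\<eta>" by linarith
qed

lemma poly_bound:
  fixes e \<eta> :: real
  assumes "e \<ge> -\<eta>" "e \<le> \<eta> + \<eta>^2/2" "0 \<le> \<eta>" "\<eta> \<le> 7/20"
  shows "6*e^2 - 4*e^3 \<le> 83/10 * \<eta>^2"
proof (cases "e \<ge> 0")
  case True
  have "\<eta> * \<eta> \<le> 7/20 * \<eta>" using assms by (intro mult_right_mono) auto
  hence "\<eta>^2/2 \<le> 7/40 * \<eta>" unfolding power2_eq_square by simp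
  hence "e \<le> 47/40 * \<eta>" using assms by linarith
  hence "e^2 \<le> (47/40 * \<eta>)^2" using True by (intro power_mono) auto
  moreover have "e^3 \<ge> 0" using True by simp
  moreover have "(47/40 * \<eta>)^2 = 2209/1600 * \<eta>^2" by (simp add: power2_eq_square)
  ultimately show ?thesis using zero_le_power2[of \<eta>] by linarith
next
  case False
  define f where "f = -e"
  have f: "0 \<le> f" "f \<le> \<eta>" using False assms unfolding f_def by auto
  have "f^2 \<le> \<eta>^2" using f by (intro power_mono) auto
  have "f^3 \<le> \<eta>^3" using f by (intro power_mono) auto
  moreover have "\<eta> * \<eta>^2 \<le> 7/20 * \<eta>^2" using assms
    by (intro mult_right_mono) auto
  hence "\<eta>^3 \<le> 7/20 * \<eta>^2" by (simp add: power3_eq_cube power2_eq_square)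
  moreover have "6*e^2 - 4*e^3 = 6*f^2 + 4*f^3" unfolding f_def by simp
  ultimately show ?thesis using \<open>f^2 \<le> \<eta>^2\<close> zero_le_power2[of \<eta>] by linarith
qed


lemma cos3_poly: "1 - cos (3 * (a::real)) = 6 * (cos a + 1/2)^2 - 4 * (cos a + 1/2)^3"
  unfolding cos_treble_cos by (simp add: power2_eq_square power3_eq_cube algebra_simps)

lemma core_abs:
  fixes r \<rho> \<alpha> \<beta> \<epsilon> h :: real
  assumes sm: "norm (1 + of_real r * cis \<alpha> + of_real \<rho> * cis \<beta>) < \<epsilon>"
    and rh: "\<bar>r - 1\<bar> \<le> h" "\<bar>\<rho> - 1\<bar> \<le> h" and h0: "0 \<le> h"
    and j: "j \<ge> 1" and bd: "3^j * (\<epsilon> + 2*h) \<le> 1 + 4/1000"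
  shows "cos (3^j * \<alpha>) \<ge> 1/20"
proof -
  define \<eta> where "\<eta> = \<epsilon> + 2*h"
  have eq: "1 + cis \<alpha> + cis \<beta> = (1 + of_real r * cis \<alpha> + of_real \<rho> * cis \<beta>)
      - of_real (r - 1) * cis \<alpha> - of_real (\<rho> - 1) * cis \<beta>"
    by (simp add: algebra_simps)
  have "norm (1 + cis \<alpha> + cis \<beta>) \<le> norm (1 + of_real r * cis \<alpha> + of_real \<rho> * cis \<beta>)
      + norm (of_real (r - 1) * cis \<alpha>) + norm (of_real (\<rho> - 1) * cis \<beta>)"
    unfolding eq by (meson norm_triangle_ineq4 order_trans add_mono order_refl)
  also have "\<dots> = norm (1 + of_real r * cis \<alpha> + of_real \<rho> * cis \<beta>) + \<bar>r - 1\<bar> + \<bar>\<rho> - 1\<bar>"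
    by (simp only: norm_mult norm_of_real norm_cis mult_1_right)
  finally have n: "norm (1 + cis \<alpha> + cis \<beta>) < \<eta>" unfolding \<eta>_def using sm rh by linarith
  have e0: "0 \<le> \<eta>" using n by (meson norm_ge_zero order_trans less_imp_le)
  have "(3::real) ^ 1 \<le> 3 ^ j" using j by (intro power_increasing) auto
  hence "3 * \<eta> \<le> 3^j * \<eta>" using e0 by (intro mult_right_mono) auto
  hence e1: "\<eta> \<le> 7/20" using bd unfolding \<eta>_def by simp
  have cr: "cos \<alpha> + 1/2 \<ge> -\<eta>" "cos \<alpha> + 1/2 \<le> \<eta> + \<eta>^2/2"
    using cos_range[OF n] e1 by auto
  have "1 - cos (3 * \<alpha>) \<le> 83/10 * \<eta>^2"
    unfolding cos3_poly using poly_bound[OF cr e0 e1] .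
  hence "1 - cos (3^j * \<alpha>) \<le> 9^(j-1) * (83/10 * \<eta>^2)"
    using cos3pow[OF j, of \<alpha>] by (meson order_trans mult_left_mono zero_le_power zero_le_numeral)
  moreover have "9^(j-1) * \<eta>^2 * 9 = (3^j * \<eta>)^2"
  proof -
    have "(9::real)^(j-1) * 9 = 9^j" using j by (cases j) auto
    also have "\<dots> = (3^j)^2" by (simp add: power_mult_distrib[symmetric] power2_eq_square)
    finally show ?thesis by (simp add: power_mult_distrib algebra_simps)
  qed
  moreover have "(3^j * \<eta>)^2 \<le> (1 + 4/1000)^2"
    using bd e0 unfolding \<eta>_def by (intro power_mono) auto
  ultimately have "9^(j-1) * \<eta>^2 * 9 \<le> (1 + 4/1000)^2" by simp
  moreover have "(1 + 4/1000::real)^2 \<le> 1017/1000" by (simp add: power2_eq_square)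
  ultimately have "9^(j-1) * \<eta>^2 \<le> 113/1000" by linarith
  moreover have "9^(j-1) * (83/10 * \<eta>^2) = 83/10 * (9^(j-1) * \<eta>^2)" by simp
  ultimately show ?thesis using \<open>1 - cos (3^j * \<alpha>) \<le> _\<close> by linarith
qed



lemma exp_mi: "exp (- \<i> * w) = of_real (exp (Im w)) * cis (- Re w)"
proof -
  have "- \<i> * w = of_real (Im w) + \<i> * of_real (- Re w)"
    by (simp add: complex_eq_iff)
  thus ?thesis by (simp only: exp_add cis_conv_exp exp_of_real)
qed

lemma phik_expand:
  "phik t k z = 1 + of_real (exp (Im z / 3^k)) * cis (- (Re z / 3^k))
      + of_real (exp (t * (Im z / 3^k))) * cis (- (t * (Re z / 3^k)))"
proof -
  define w where "w = z / 3^k"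
  have w': "w = z / of_real (3^k)" unfolding w_def by simp
  have r: "Re w = Re z / 3^k" "Im w = Im z / 3^k" unfolding w' 
    by (simp_all only: Re_divide_of_real Im_divide_of_real)
  have e2: "- \<i> * complex_of_real t * w = - \<i> * (of_real t * w)" by (simp only: mult.assoc)
  have r2: "Re (of_real t * w) = t * Re w" "Im (of_real t * w) = t * Im w" by simp_all
  show ?thesis unfolding phik_def phit_def w_def[symmetric] e2 exp_mi r2 r ..
qed


lemma core:
  fixes t :: real and za zb :: complex
  assumes t: "0 \<le> t" "t \<le> 1"
    and i1: "\<bar>Im za\<bar> \<le> 1/1000" and i2: "\<bar>Im zb\<bar> \<le> 1/1000"
    and re: "\<bar>Re za - Re zb\<bar> \<le> 2/1000"
    and ss: "s' < s" "s - s' \<le> L"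
    and small: "norm (phik t s zb) < (1/3)^L"
  shows "norm (phik t s' za) \<ge> 1"
proof -
  define j where "j = s - s'"
  have j1: "j \<ge> 1" and jL: "j \<le> L" and sj: "s = j + s'" using ss by (auto simp: j_def)
  have p3: "(3::real)^s = 3^j * 3^s'" unfolding sj by (simp add: power_add)
  have s1: "(1::real) \<le> 3^s" "(1::real) \<le> 3^s'" by simp_all
  define y where "y = Im zb / 3^s"
  define h where "h = 2/1000 / (3::real)^s"
  have "\<bar>y\<bar> = \<bar>Im zb\<bar> / 3^s" by (simp add: y_def abs_divide)
  also have "\<dots> \<le> (1/1000) / 3^s" by (rule divide_right_mono[OF i2]) simp
  finally have hy: "\<bar>y\<bar> \<le> 1/1000 / 3^s" .
  have h0: "0 \<le> h" unfolding h_def by simp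
  have "1/1000 / (3::real)^s \<le> 1/1000" using s1 by (simp add: divide_le_eq)
  hence y12: "\<bar>y\<bar> \<le> 1/2" using hy by linarith
  have ty: "\<bar>t*y\<bar> \<le> \<bar>y\<bar>" using t unfolding abs_mult by (simp add: mult_left_le_one_le)
  have r1: "\<bar>exp y - 1\<bar> \<le> h" using exp_near1[OF y12] hy unfolding h_def by linarith
  have r2: "\<bar>exp (t*y) - 1\<bar> \<le> h" using exp_near1[of "t*y"] y12 ty hy unfolding h_def by linarith
  define \<alpha> where "\<alpha> = -(Re zb/3^s)"
  define \<beta> where "\<beta> = -(t*(Re zb/3^s))"
  have sm: "norm (1 + of_real (exp y) * cis \<alpha> + of_real (exp (t*y)) * cis \<beta>) < (1/3)^L"
    using small unfolding phik_expand y_def \<alpha>_def \<beta>_def .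
  have sm': "norm (1 + of_real (exp (t*y)) * cis \<beta> + of_real (exp y) * cis \<alpha>) < (1/3)^L"
    using sm by (simp add: ac_simps)
  have "(1/3::real)^L \<le> (1/3)^j" using jL by (intro power_decreasing) auto
  hence b1: "3^j * (1/3::real)^L \<le> 1" by (simp add: power_one_over divide_le_eq)
  have "3^j * h = 2/1000 / 3^s'" unfolding h_def p3 by simp
  also have "\<dots> \<le> 2/1000" using s1 by (simp add: divide_le_eq)
  finally have b2: "3^j * h \<le> 2/1000" .
  have bd: "3^j * ((1/3)^L + 2*h) \<le> 1 + 4/1000" using b1 b2 by (simp add: algebra_simps)
  have ca: "cos (3^j * \<alpha>) \<ge> 1/20" by (rule core_abs[OF sm r1 r2 h0 j1 bd])
  have cb: "cos (3^j * \<beta>) \<ge> 1/20" by (rule core_abs[OF sm' r2 r1 h0 j1 bd])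
  define \<alpha>' where "\<alpha>' = -(Re za/3^s')"
  define \<beta>' where "\<beta>' = -(t*(Re za/3^s'))"
  have e1: "3^j * \<alpha> = -(Re zb/3^s')" unfolding \<alpha>_def p3 by simp
  have e2: "3^j * \<beta> = -(t*(Re zb/3^s'))" unfolding \<beta>_def p3 by simp
  have d: "\<bar>Re za - Re zb\<bar> / 3^s' \<le> 2/1000"
  proof -
    have "\<bar>Re za - Re zb\<bar> / 3^s' \<le> \<bar>Re za - Re zb\<bar> / 1"
      using s1 by (intro divide_left_mono) auto
    hence "\<bar>Re za - Re zb\<bar> / 3^s' \<le> \<bar>Re za - Re zb\<bar>" by (simp only: div_by_1)
    thus ?thesis using re by linarith
  qed
  have da: "\<bar>\<alpha>' - 3^j * \<alpha>\<bar> \<le> 2/1000"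
  proof -
    have "\<alpha>' - 3^j * \<alpha> = - ((Re za - Re zb)/3^s')" unfolding \<alpha>'_def e1 by (simp add: diff_divide_distrib)
    thus ?thesis using d by (simp add: abs_divide)
  qed
  have db: "\<bar>\<beta>' - 3^j * \<beta>\<bar> \<le> 2/1000"
  proof -
    have "\<beta>' - 3^j * \<beta> = - (t * ((Re za - Re zb)/3^s'))" unfolding \<beta>'_def e2
      by (simp add: diff_divide_distrib algebra_simps)
    hence "\<bar>\<beta>' - 3^j * \<beta>\<bar> = t * (\<bar>Re za - Re zb\<bar>/3^s')" using t by (simp add: abs_divide abs_mult)
    also have "\<dots> \<le> 1 * (\<bar>Re za - Re zb\<bar>/3^s')" using t by (intro mult_right_mono) auto
    finally have "\<bar>\<beta>' - 3^j * \<beta>\<bar> \<le> \<bar>Re za - Re zb\<bar>/3^s'" by (simp only: mult_1_left)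
    thus ?thesis using d by linarith
  qed
  have "cos \<alpha>' \<ge> 0" using cos_lip[of "3^j * \<alpha>" \<alpha>'] ca da by linarith
  moreover have "cos \<beta>' \<ge> 0" using cos_lip[of "3^j * \<beta>" \<beta>'] cb db by linarith
  ultimately show ?thesis unfolding phik_expand \<alpha>'_def[symmetric] \<beta>'_def[symmetric]
    by (intro norm_ge1) auto
qed



lemma level_exists: "(1/3::real)^n \<le> x \<Longrightarrow> x < 1 \<Longrightarrow> \<exists>L<n. (1/3)^(Suc L) \<le> x \<and> x < (1/3)^L"
proof (induction n)
  case 0 thus ?case by simp
next
  case (Suc n)
  show ?case
  proof (cases "(1/3::real)^n \<le> x")
    case True with Suc obtain L where "L < n" "(1/3)^(Suc L) \<le> x \<and> x < (1/3)^L" by blast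
    thus ?thesis by (intro exI[of _ L]) auto
  next
    case False thus ?thesis using Suc.prems by (intro exI[of _ n]) auto
  qed
qed

lemma comb:
  fixes v :: "nat \<Rightarrow> real"
  assumes nn: "\<And>k. v k \<ge> 0"
    and H: "\<And>s s' L. v s < (1/3)^L \<Longrightarrow> s' < s \<Longrightarrow> s - s' \<le> L \<Longrightarrow> v s' \<ge> 1"
  shows "\<exists>k0\<le>m. (\<Prod>k\<in>{0..m}-{k0}. v k) \<ge> (1/3)^m"
proof (induction m rule: less_induct)
  case (less m)
  consider (a) "v m \<ge> 1" | (b) "v m < (1/3)^m" | (c) "(1/3)^m \<le> v m" "v m < 1" by linarith
  thus ?case
  proof cases
    case a
    show ?thesis
    proof (cases m)
      case 0 thus ?thesis by (intro exI[of _ 0]) auto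
    next
      case (Suc m')
      then obtain k0 where k0: "k0 \<le> m'" "(\<Prod>k\<in>{0..m'}-{k0}. v k) \<ge> (1/3)^m'"
        using less by blast
      have eq: "{0..m}-{k0} = insert m ({0..m'}-{k0})" using Suc k0 by auto
      have "(\<Prod>k\<in>{0..m}-{k0}. v k) = v m * (\<Prod>k\<in>{0..m'}-{k0}. v k)"
        unfolding eq using Suc by (subst prod.insert) auto
      also have "\<dots> \<ge> 1 * (1/3)^m'" using a k0 by (intro mult_mono) (auto simp: nn prod_nonneg)
      finally have "(\<Prod>k\<in>{0..m}-{k0}. v k) \<ge> (1/3)^m'" by simp
      moreover have "(1/3::real)^m \<le> (1/3)^m'" using Suc by (intro power_decreasing) auto
      ultimately have "(1/3)^m \<le> (\<Prod>k\<in>{0..m}-{k0}. v k)" by linarith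
      thus ?thesis using k0 Suc by (intro exI[of _ k0]) auto
    qed
  next
    case b
    have "(\<Prod>k\<in>{0..m}-{m}. v k) \<ge> 1"
      by (rule prod_ge_1) (use b H in auto)
    moreover have "(1/3::real)^m \<le> 1" by (simp add: power_le_one)
    ultimately show ?thesis by (intro exI[of _ m]) auto
  next
    case c
    then obtain L where L: "L < m" "(1/3)^(Suc L) \<le> v m" "v m < (1/3)^L"
      using level_exists by blast
    define m' where "m' = m - Suc L"
    have "m' < m" using L by (simp add: m'_def)
    then obtain k0 where k0: "k0 \<le> m'" "(\<Prod>k\<in>{0..m'}-{k0}. v k) \<ge> (1/3)^m'"
      using less by blast
    have eq: "{0..m}-{k0} = insert m (({0..m'}-{k0}) \<union> {Suc m'..<m})"
      using k0 L unfolding m'_def by auto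
    have "(\<Prod>k\<in>{0..m}-{k0}. v k) = v m * ((\<Prod>k\<in>{0..m'}-{k0}. v k) * (\<Prod>k\<in>{Suc m'..<m}. v k))"
    proof -
      have m1: "m \<notin> ({0..m'}-{k0}) \<union> {Suc m'..<m}" using \<open>m' < m\<close> by auto
      have "prod v (({0..m'}-{k0}) \<union> {Suc m'..<m}) = prod v ({0..m'}-{k0}) * prod v {Suc m'..<m}"
        by (rule prod.union_disjoint) auto
      thus ?thesis unfolding eq using m1 by (subst prod.insert) auto
    qed
    moreover have "(\<Prod>k\<in>{Suc m'..<m}. v k) \<ge> 1"
    proof (rule prod_ge_1)
      fix k assume "k \<in> {Suc m'..<m}"
      hence "k < m" "m - k \<le> L" using L unfolding m'_def by auto
      thus "1 \<le> v k" using H[OF L(3)] by blast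
    qed
    moreover have "(1/3)^(Suc L) * ((1/3)^m' * 1) \<le> v m * ((\<Prod>k\<in>{0..m'}-{k0}. v k) * (\<Prod>k\<in>{Suc m'..<m}. v k))"
      using L k0 calculation(2) by (intro mult_mono) (auto simp: nn prod_nonneg)
    ultimately have "(\<Prod>k\<in>{0..m}-{k0}. v k) \<ge> (1/3)^(Suc L) * ((1/3)^m' * 1)"
      by simp
    moreover have "(1/3::real)^(Suc L) * ((1/3)^m' * 1) = (1/3)^m"
    proof -
      have "Suc L + m' = m" using L unfolding m'_def by simp
      thus ?thesis by (metis mult_1_right power_add)
    qed
    ultimately show ?thesis using k0 \<open>m' < m\<close> by (intro exI[of _ k0]) auto
  qed
qed

lemma powr3: "(3::real) powr (- real m) = (1/3)^m"
  by (simp add: powr_minus powr_realpow power_one_over inverse_eq_divide)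

theorem proposition21:
  shows "\<exists>\<delta>::real. \<delta> > 0 \<and>
    (\<forall>t\<in>{0..1::real}. \<forall>m::nat.
      (\<forall>z::complex. \<bar>Im z\<bar> \<le> \<delta> \<longrightarrow>
         (\<exists>k0\<in>{0..m}. norm (Phi_excl t m k0 z) \<ge> 3 powr (- real m))) \<and>
      (\<forall>x0::real. \<forall>k1\<in>{0..m}. \<forall>k2\<in>{0..m}.
         critical t m (rect x0 \<delta>) k1 \<and> critical t m (rect x0 \<delta>) k2 \<longrightarrow> k1 = k2))"
proof (intro exI[of _ "1/1000"] conjI ballI allI impI)
  show "(0::real) < 1/1000" by simp
next
  fix t :: real and m :: nat and z :: complex
  assume t: "t \<in> {0..1}" and z: "\<bar>Im z\<bar> \<le> 1/1000"
  have "\<exists>k0\<le>m. (\<Prod>k\<in>{0..m}-{k0}. norm (phik t k z)) \<ge> (1/3)^m"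
  proof (rule comb)
    fix s s' L assume "norm (phik t s z) < (1/3)^L" "s' < s" "s - s' \<le> L"
    thus "1 \<le> norm (phik t s' z)" using t z by (intro core[where s=s and L=L and zb=z]) auto
  qed simp
  then obtain k0 where "k0 \<le> m" "(\<Prod>k\<in>{0..m}-{k0}. norm (phik t k z)) \<ge> (1/3)^m" by blast
  thus "\<exists>k0\<in>{0..m}. norm (Phi_excl t m k0 z) \<ge> 3 powr (- real m)"
    unfolding Phi_excl_def powr3 prod_norm by auto
next
  fix t :: real and m :: nat and x0 :: real and k1 k2
  assume t: "t \<in> {0..1}" and k: "k1 \<in> {0..m}" "k2 \<in> {0..m}"
    and cr: "critical t m (rect x0 (1/1000)) k1 \<and> critical t m (rect x0 (1/1000)) k2"
  then obtain z1 z2 where z1: "z1 \<in> rect x0 (1/1000)" "norm (phik t k1 z1) < (1/3)^m"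
    and z2: "z2 \<in> rect x0 (1/1000)" "norm (phik t k2 z2) < (1/3)^m"
    unfolding critical_def powr3 by blast
  have R: "\<bar>Im z1\<bar> \<le> 1/1000" "\<bar>Im z2\<bar> \<le> 1/1000" "\<bar>Re z1 - Re z2\<bar> \<le> 2/1000"
    "\<bar>Re z2 - Re z1\<bar> \<le> 2/1000"
  proof -
    have a: "x0 - 1/1000 \<le> Re z1" "Re z1 \<le> x0 + 1/1000" "-(1/1000) \<le> Im z1" "Im z1 \<le> 1/1000"
      using z1(1) unfolding rect_def by auto
    have b: "x0 - 1/1000 \<le> Re z2" "Re z2 \<le> x0 + 1/1000" "-(1/1000) \<le> Im z2" "Im z2 \<le> 1/1000"
      using z2(1) unfolding rect_def by auto
    show "\<bar>Im z1\<bar> \<le> 1/1000" using a unfolding abs_le_iff by linarith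
    show "\<bar>Im z2\<bar> \<le> 1/1000" using b unfolding abs_le_iff by linarith
    show "\<bar>Re z1 - Re z2\<bar> \<le> 2/1000" using a b unfolding abs_le_iff by linarith
    show "\<bar>Re z2 - Re z1\<bar> \<le> 2/1000" using a b unfolding abs_le_iff by linarith
  qed
  have le1: "(1/3::real)^m \<le> 1" by (simp add: power_le_one)
  show "k1 = k2"
  proof (rule ccontr)
    assume "k1 \<noteq> k2"
    then consider "k1 < k2" | "k2 < k1" by linarith
    thus False
    proof cases
      case 1
      have "norm (phik t k1 z1) \<ge> 1"
        by (rule core[where s=k2 and L=m and zb=z2]) (use t R 1 k z2 in auto)
      thus False using z1 le1 by linarith
    next
      case 2
      have "norm (phik t k2 z2) \<ge> 1"
        by (rule core[where s=k1 and L=m and zb=z1]) (use t R 2 k z1 in auto)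
      thus False using z2 le1 by linarith
    qed
  qed
qed


end
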